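(* Let $\alpha<0<\beta$ and $\theta^*=\beta/(\beta-\alpha)\in(0,1)$. Then for every $\theta\in[0,1]$ with $\theta\neq\theta^*$, $E_{\theta^*}\succ E_\theta$; that is, with $\theta_1=\theta$ and $\theta_2=\theta^*$, for every $p^0\in L^1([0,1])$ with $p^0\ge0$ and $\int_0^1p^0\,dx=1$, \[ \pi_1[p^0]<\int_0^1x\,p^0(x)\,dx . \]
   Context: An $E_\theta$-strategist ($\theta\in[0,1]$) plays pure strategy I with probability $\theta$ and pure strategy II with probability $1-\theta$ in a two-strategy game (Moran process) between $E_{\theta_1}$ and $E_{\theta_2}$ strategists, with payoffs scaled as $(A,B,C,D)=(1,1,1,1)+\frac1N(a,b,c,d)+o(1/N)$ and $\alpha=a-c$, $\beta=b-d$. In the associated large-population (thermodynamical) limit, with $x$ the fraction of $E_{\theta_1}$ strategists and $p^0$ the initial density of $x$, the fixation probability of the $E_{\theta_1}$ type is \[ \pi_1[p^0]=\frac{\int_0^1p^0(x)\int_0^xF_{(\theta_1,\theta_2)}(y)\,dy\,dx}{\int_0^1F_{(\theta_1,\theta_2)}(y)\,dy},\qquad F_{(\theta_1,\theta_2)}(y)=\exp\!\Big(-y^2(\theta_1-\theta_2)^2\tfrac{\alpha-\beta}{2}-y(\theta_1-\theta_2)\big(\theta_2\alpha+(1-\theta_2)\beta\big)\Big). \] In the neutral case $\theta_1=\theta_2$ this equals $\pi_1^{\rm N}[p^0]=\int_0^1xp^0(x)\,dx$. Definition: $E_{\theta_2}\succ E_{\theta_1}$ ($E_{\theta_2}$ dominates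 $E_{\theta_1}$) if for every nontrivial initial condition $p^0$ the fixation probability $\pi_1[p^0]$ of the $E_{\theta_1}$ type is strictly smaller than the neutral value $\int_0^1xp^0(x)\,dx$. *)

theory Defs
  imports "HOL-Analysis.Analysis"
begin

text \<open>The weight function F_(theta1,theta2)(y), with alpha = a - c, beta = b - d.\<close>
definition Fw :: "real \<Rightarrow> real \<Rightarrow> real \<Rightarrow> real \<Rightarrow> real \<Rightarrow> real" where
  "Fw \<alpha> \<beta> \<theta>1 \<theta>2 y =
     exp (- (y\<^sup>2 * (\<theta>1 - \<theta>2)\<^sup>2 * ((\<alpha> - \<beta>) / 2))
          - y * (\<theta>1 - \<theta>2) * (\<theta>2 * \<alpha> + (1 - \<theta>2) * \<beta>))"

text \<open>Fixation probability pi_1[p0] of the E_theta1 type in the thermodynamical limit.\<close>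
definition fixprob1 :: "real \<Rightarrow> real \<Rightarrow> real \<Rightarrow> real \<Rightarrow> (real \<Rightarrow> real) \<Rightarrow> real" where
  "fixprob1 \<alpha> \<beta> \<theta>1 \<theta>2 p0 =
     (LBINT x:{0..1}. p0 x * (LBINT y:{0..x}. Fw \<alpha> \<beta> \<theta>1 \<theta>2 y))
     / (LBINT y:{0..1}. Fw \<alpha> \<beta> \<theta>1 \<theta>2 y)"

definition neutral_fixprob :: "(real \<Rightarrow> real) \<Rightarrow> real" where
  "neutral_fixprob p0 = (LBINT x:{0..1}. x * p0 x)"

end

theory Submission imports Defs begin

lemma I_less:
  fixes F :: "real \<Rightarrow> real" and x :: real assumes x: "0 < x" "x < 1"
  and P1: "continuous_on UNIV F" and P2: "\<And>a b. 0 \<le> a \<Longrightarrow> a < b \<Longrightarrow> F a < F b"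
    and P3: "\<And>a b. 0 \<le> a \<Longrightarrow> a \<le> b \<Longrightarrow> F a \<le> F b"
  shows "integral {0..x} F < x * integral {0..1} F"
proof -
  note P = P1 P2 P3
  have int: "\<And>a b. F integrable_on {a..b}" by (rule integrable_continuous_interval) (rule continuous_on_subset[OF P(1)], simp)
  have s1: "integral {0..x/2} F + integral {x/2..x} F = integral {0..x} F"
    using x by (intro Henstock_Kurzweil_Integration.integral_combine int) auto
  have s2: "integral {0..x} F + integral {x..1} F = integral {0..1} F"
    using x by (intro Henstock_Kurzweil_Integration.integral_combine int) auto
  have m1: "\<And>y. y \<in> {0..x/2} \<Longrightarrow> F y \<le> F (x/2)" by (rule P3) auto
  have m2: "\<And>y. y \<in> {x/2..x} \<Longrightarrow> F y \<le> F x" by (rule P3) (use x in auto)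
  have m3: "\<And>y. y \<in> {x..1} \<Longrightarrow> F x \<le> F y" by (rule P3) (use x in auto)
  have b1: "integral {0..x/2} F \<le> integral {0..x/2} (\<lambda>_. F (x/2))"
    using x by (intro Henstock_Kurzweil_Integration.integral_le int integrable_const_ivl) (simp_all add: m1 m2 m3)
  have b2: "integral {x/2..x} F \<le> integral {x/2..x} (\<lambda>_. F x)"
    using x by (intro Henstock_Kurzweil_Integration.integral_le int integrable_const_ivl) (simp_all add: m1 m2 m3)
  have b3: "integral {x..1} (\<lambda>_. F x) \<le> integral {x..1} F"
    
    using x by (intro Henstock_Kurzweil_Integration.integral_le int integrable_const_ivl) (simp_all add: m1 m2 m3)
  have e1: "integral {0..x/2} (\<lambda>_. F (x/2)) = x/2 * F (x/2)" using x by simp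
  have e2: "integral {x/2..x} (\<lambda>_. F x) = x/2 * F x" using x by simp
  have e3: "integral {x..1} (\<lambda>_. F x) = (1-x) * F x" using x by simp
  have lt: "F (x/2) < F x" using x by (intro P(2)) auto
  have A: "integral {0..x} F < x * F x" 
  proof -
    have "x/2 * F (x/2) < x/2 * F x" using lt x by simp
    then show ?thesis using s1 b1 b2 e1 e2 by linarith
  qed
  have B: "(1-x) * integral {0..x} F < (1-x) * (x * F x)" using A x by simp
  have C: "x * ((1-x) * F x) \<le> x * integral {x..1} F" using b3 e3 x by (simp add: mult_left_mono)
  have D: "x * integral {0..1} F = x * integral {0..x} F + x * integral {x..1} F"
    using s2 by (simp add: algebra_simps flip: s2)
  have B': "integral {0..x} F - x * integral {0..x} F < x * ((1-x) * F x)" using B by (simp add: algebra_simps)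
  show ?thesis using D B' C by linarith
qed


lemma mult_cont_integrable:
  fixes p0 g :: "real \<Rightarrow> real"
  assumes p: "set_integrable lborel {0..1} p0" and g: "continuous_on {0..1} g"
  shows "set_integrable lborel {0..1} (\<lambda>x. p0 x * g x)"
proof -
  have "compact (g ` {0..1})" by (intro compact_continuous_image g) simp
  then obtain B where B: "\<And>x. x \<in> {0..1} \<Longrightarrow> norm (g x) \<le> B"
    using compact_imp_bounded bounded_iff by (metis image_eqI)
  have m1: "(\<lambda>x. indicator {0..1} x *\<^sub>R p0 x) \<in> borel_measurable lborel"
    using p unfolding set_integrable_def by (rule borel_measurable_integrable)
  have m2: "(\<lambda>x. indicator {0..1} x *\<^sub>R g x) \<in> borel_measurable lborel"
    using borel_measurable_continuous_on_indicator[OF _ g] by simp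
  have eq: "(\<lambda>x. indicator {0..1} x *\<^sub>R (p0 x * g x)) =
     (\<lambda>x. (indicator {0..1} x *\<^sub>R p0 x) * (indicator {0..1} x *\<^sub>R g x))"
    by (auto simp: indicator_def)
  have meas: "set_borel_measurable lborel {0..1} (\<lambda>x. p0 x * g x)"
    unfolding set_borel_measurable_def eq using m1 m2 by (rule borel_measurable_times)
  show ?thesis
  proof (rule set_integrable_bound[OF _ meas])
    show "set_integrable lborel {0..1} (\<lambda>x. B * p0 x)" using p by simp
    show "AE x in lborel. x \<in> {0..1} \<longrightarrow> norm (p0 x * g x) \<le> norm (B * p0 x)"
    proof (rule AE_I2, rule impI)
      fix x :: real assume x: "x \<in> {0..1}"
      have "0 \<le> B" using B[OF x] by (meson norm_ge_zero order_trans)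
      then have "norm (B * p0 x) = B * \<bar>p0 x\<bar>" by (simp add: abs_mult)
      moreover have "norm (p0 x * g x) = \<bar>p0 x\<bar> * norm (g x)" by (simp add: abs_mult)
      moreover have "\<bar>p0 x\<bar> * norm (g x) \<le> \<bar>p0 x\<bar> * B" using B[OF x] by (simp add: mult_left_mono)
      ultimately show "norm (p0 x * g x) \<le> norm (B * p0 x)" by (simp add: mult.commute)
    qed
  qed
qed

theorem mainTheorem6:
  fixes \<alpha> \<beta> \<theta> :: real and p0 :: "real \<Rightarrow> real"
  assumes "\<alpha> < 0" and "0 < \<beta>"
    and "\<theta> \<in> {0..1}" and "\<theta> \<noteq> \<beta> / (\<beta> - \<alpha>)"
    and "set_integrable lborel {0..1} p0"
    and "AE x in lborel. x \<in> {0..1} \<longrightarrow> 0 \<le> p0 x"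
    and "(LBINT x:{0..1}. p0 x) = 1"
  shows "fixprob1 \<alpha> \<beta> \<theta> (\<beta> / (\<beta> - \<alpha>)) p0 < neutral_fixprob p0"
proof -
  define ts where "ts = \<beta> / (\<beta> - \<alpha>)"
  define c where "c = (\<theta> - ts)\<^sup>2 * (\<beta> - \<alpha>) / 2"
  define F where "F = (\<lambda>y::real. exp (c * y\<^sup>2))"
  have ba: "\<beta> - \<alpha> > 0" using assms(1,2) by simp
  have c: "c > 0" unfolding c_def using ba assms(4) ts_def by simp
  have z: "ts * \<alpha> + (1 - ts) * \<beta> = 0" unfolding ts_def using ba by (simp add: field_simps)
  have Fw: "Fw \<alpha> \<beta> \<theta> ts = F"
    unfolding Fw_def F_def c_def z by (rule ext) (simp add: field_simps)
  have P1: "continuous_on UNIV F" unfolding F_def by (intro continuous_intros)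
  have P2: "F a < F b" if "0 \<le> a" "a < b" for a b
  proof -
    have "a\<^sup>2 < b\<^sup>2" using that by (simp add: power_strict_mono)
    then show ?thesis unfolding F_def using c by simp
  qed
  have P3: "F a \<le> F b" if "0 \<le> a" "a \<le> b" for a b
  proof -
    have "a\<^sup>2 \<le> b\<^sup>2" using that by (simp add: power_mono)
    then show ?thesis unfolding F_def using c by simp
  qed
  define I where "I = (\<lambda>x. integral {0..x} F)"
  have LI: "\<And>x. (LBINT y:{0..x}. F y) = I x"
    unfolding I_def
    by (rule set_borel_integral_eq_integral(2), rule borel_integrable_atLeastAtMost',
        rule continuous_on_subset[OF P1], simp)
  have Icont: "continuous_on {0..1} I" unfolding I_def
    by (rule indefinite_integral_continuous_1, rule integrable_continuous_interval,
        rule continuous_on_subset[OF P1], simp)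
  have Iless: "\<And>x. 0 < x \<Longrightarrow> x < 1 \<Longrightarrow> I x < x * I 1"
    unfolding I_def using P1 P2 P3 by (intro I_less) auto
  have I0: "I 0 = 0" unfolding I_def by simp
  have Ihalf: "0 \<le> I (1/2)" unfolding I_def
    by (rule integral_nonneg, rule integrable_continuous_interval,
        rule continuous_on_subset[OF P1], simp, simp add: F_def)
  have D: "I 1 > 0" using Iless[of "1/2"] Ihalf by simp
  define g where "g = (\<lambda>x. x * I 1 - I x)"
  have gcont: "continuous_on {0..1} g" unfolding g_def by (intro continuous_intros Icont)
  have gpos: "\<And>x. 0 < x \<Longrightarrow> x < 1 \<Longrightarrow> g x > 0" unfolding g_def using Iless by simp
  have gnn: "\<And>x. x \<in> {0..1} \<Longrightarrow> g x \<ge> 0"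
  proof -
    fix x :: real assume x: "x \<in> {0..1}"
    show "g x \<ge> 0"
    proof (cases "x = 0 \<or> x = 1")
      case True then show ?thesis unfolding g_def using I0 by auto
    next
      case False then show ?thesis using gpos[of x] x by auto
    qed
  qed
  have int1: "set_integrable lborel {0..1} (\<lambda>x. p0 x * I x)"
    by (rule mult_cont_integrable[OF assms(5) Icont])
  have int2: "set_integrable lborel {0..1} (\<lambda>x. p0 x * x)"
    by (rule mult_cont_integrable[OF assms(5)]) (intro continuous_intros)
  have int3: "set_integrable lborel {0..1} (\<lambda>x. p0 x * g x)"
    by (rule mult_cont_integrable[OF assms(5) gcont])
  have N: "fixprob1 \<alpha> \<beta> \<theta> ts p0 = (LBINT x:{0..1}. p0 x * I x) / I 1"
    unfolding fixprob1_def Fw LI by simp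
  have Q: "neutral_fixprob p0 = (LBINT x:{0..1}. p0 x * x)"
    unfolding neutral_fixprob_def by (simp add: mult.commute)
  have diff: "(LBINT x:{0..1}. p0 x * g x) = (LBINT x:{0..1}. p0 x * x) * I 1 - (LBINT x:{0..1}. p0 x * I x)"
  proof -
    have "(LBINT x:{0..1}. p0 x * g x) = (LBINT x:{0..1}. p0 x * x * I 1 - p0 x * I x)"
      unfolding g_def by (simp add: algebra_simps)
    also have "\<dots> = (LBINT x:{0..1}. p0 x * x * I 1) - (LBINT x:{0..1}. p0 x * I x)"
      using int1 int2 by (intro set_integral_diff(2)) auto
    also have "\<dots> = (LBINT x:{0..1}. p0 x * x) * I 1 - (LBINT x:{0..1}. p0 x * I x)"
      by simp
    finally show ?thesis .
  qed
  define h where "h = (\<lambda>x. indicator {0..1} x *\<^sub>R (p0 x * g x))"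
  have hint: "integrable lborel h" using int3 unfolding set_integrable_def h_def .
  have hnn: "AE x in lborel. 0 \<le> h x"
    using assms(6) by eventually_elim (auto simp: h_def indicator_def gnn)
  have pos: "(LBINT x:{0..1}. p0 x * g x) > 0"
  proof -
    have ge: "integral\<^sup>L lborel h \<ge> 0" by (rule integral_nonneg_AE[OF hnn])
    have ne: "integral\<^sup>L lborel h \<noteq> 0"
    proof
      assume "integral\<^sup>L lborel h = 0"
      then have ae: "AE x in lborel. h x = 0" using integral_nonneg_eq_0_iff_AE[OF hint hnn] by simp
      have "AE x in lborel. indicator {0..1} x *\<^sub>R p0 x = 0"
        using ae AE_lborel_singleton[of 0] AE_lborel_singleton[of 1]
      proof eventually_elim
        case (elim x)
        show ?case
        proof (cases "x \<in> {0..1}")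
          case True
          then have "0 < x" "x < 1" using elim by auto
          then have "g x > 0" by (rule gpos)
          then show ?thesis using elim True by (simp add: h_def)
        qed simp
      qed
      then have "(LBINT x:{0..1}. p0 x) = 0"
        unfolding set_lebesgue_integral_def by (rule integral_eq_zero_AE)
      then show False using assms(7) by simp
    qed
    show ?thesis using ge ne unfolding h_def set_lebesgue_integral_def by simp
  qed
  have "(LBINT x:{0..1}. p0 x * I x) < (LBINT x:{0..1}. p0 x * x) * I 1"
    using pos diff by simp
  then have "(LBINT x:{0..1}. p0 x * I x) / I 1 < (LBINT x:{0..1}. p0 x * x)"
    using D by (simp add: divide_less_eq)
  then show ?thesis using N Q unfolding ts_def by simp
qed

end
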